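(* Let $d\ge1$, $n\ge1$, $R>0$, $0<r_-<r_+$. Let $\psi$ be an increasing $C^2$ function on $]0,+\infty[$ with $\psi''\le0$ and $\liminf_{\rho\to+\infty}\rho\,\psi'(\rho)>0$. Let $\mathcal{D}\subset\mathbb{R}^{n(d+1)}$ be the set of $\mathbf{x}=(x_1,\breve{x}_1,\ldots,x_n,\breve{x}_n)$ ($x_i\in\mathbb{R}^d$, $\breve{x}_i\in\mathbb{R}$) with $|x_i|>R+\breve{x}_i$ and $r_-<\breve{x}_i<r_+$ for all $i$, and $|x_i-x_j|>\breve{x}_i+\breve{x}_j$ for all $i\neq j$. For $\theta>0$ small enough that $\int_{\mathcal{D}}e^{-\frac{1}{\theta^2}\sum_{i}\psi(|y_i|)}d\mathbf{y}<\infty$ (which holds for all sufficiently small $\theta$), let $$\mu_\theta(d\mathbf{x})=\frac{\mathbf{1}_{\mathcal{D}}(\mathbf{x})e^{-\frac{1}{\theta^2}\sum_{i=1}^n\psi(|x_i|)}d\mathbf{x}}{\int_{\mathcal{D}}e^{-\frac{1}{\theta^2}\sum_{i=1}^n\psi(|y_i|)}d\mathbf{y}}.$$ For $\varepsilon>0$ let $$A_\varepsilon=\{\mathbf{x}\in\mathcal{D}:\ \exists\mathbf{y}\in\mathcal{D}\ \exists k\le n \text{ such that } y_i=x_i \text{ for all } i\neq k \text{ and } |y_k|<|x_k|-\varepsilon\}.$$ Then for every $\varepsilon>0$, $\lim_{\theta\to0}\mu_\theta(A_\varepsilon)=0$.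
   Context: $d\mathbf{x}$ denotes Lebesgue measure on $\mathbb{R}^{n(d+1)}$; $|\cdot|$ is the Euclidean norm. In the condition $y_i=x_i$ only the position coordinates $x_i\in\mathbb{R}^d$ are compared (radii $\breve{y}_i$ are unconstrained beyond $\mathbf{y}\in\mathcal{D}$). The measure $\mu_\theta$ is the equilibrium (time-reversible) distribution of a system of $n$ spherical particles with positions $x_i$ and radii $\breve{x}_i$ around a planet $B(0,R)$ at temperature $\theta$. *)

theory Defs
  imports "HOL-Analysis.Analysis"
begin

text \<open>A configuration of n particles in R^d: the index type 'n (finite) labels the
particles, each particle i is a pair (x_i, radius_i) :: real^'d \<times> real.\<close>

type_synonym ('d, 'n) config = "((real^'d) \<times> real)^'n"

definition pos :: "('d::finite, 'n::finite) config \<Rightarrow> 'n \<Rightarrow> real^'d" where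
  "pos x i = fst (x $ i)"

definition rad :: "('d::finite, 'n::finite) config \<Rightarrow> 'n \<Rightarrow> real" where
  "rad x i = snd (x $ i)"

definition confD :: "real \<Rightarrow> real \<Rightarrow> real \<Rightarrow> ('d::finite, 'n::finite) config set" where
  "confD R rm rp = {x. (\<forall>i. norm (pos x i) > R + rad x i \<and> rm < rad x i \<and> rad x i < rp)
                      \<and> (\<forall>i j. i \<noteq> j \<longrightarrow> norm (pos x i - pos x j) > rad x i + rad x j)}"

definition weight :: "(real \<Rightarrow> real) \<Rightarrow> real \<Rightarrow> ('d::finite, 'n::finite) config \<Rightarrow> real" where
  "weight \<psi> \<theta> x = exp (- (1 / \<theta>\<^sup>2) * (\<Sum>i\<in>UNIV. \<psi> (norm (pos x i))))"

definition wint :: "(real \<Rightarrow> real) \<Rightarrow> real \<Rightarrow> ('d::finite, 'n::finite) config set \<Rightarrow> ennreal" where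
  "wint \<psi> \<theta> S = (\<integral>\<^sup>+ y. indicator S y * ennreal (weight \<psi> \<theta> y) \<partial>lborel)"

text \<open>The equilibrium measure mu_theta of a set A (meaningful when wint over D is finite).\<close>
definition mu :: "(real \<Rightarrow> real) \<Rightarrow> real \<Rightarrow> real \<Rightarrow> real \<Rightarrow> real
                   \<Rightarrow> ('d::finite, 'n::finite) config set \<Rightarrow> real" where
  "mu \<psi> R rm rp \<theta> A =
     enn2real (wint \<psi> \<theta> (A \<inter> confD R rm rp)) / enn2real (wint \<psi> \<theta> (confD R rm rp :: ('d, 'n) config set))"

definition Aeps :: "real \<Rightarrow> real \<Rightarrow> real \<Rightarrow> real \<Rightarrow> ('d::finite, 'n::finite) config set" where
  "Aeps R rm rp \<epsilon> = {x \<in> confD R rm rp. \<exists>y \<in> confD R rm rp. \<exists>k.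
        (\<forall>i. i \<noteq> k \<longrightarrow> pos y i = pos x i) \<and> norm (pos y k) < norm (pos x k) - \<epsilon>}"

end

theory Submission imports Defs "HOL-Real_Asymp.Real_Asymp" begin

lemma radial_finite:
  fixes f :: "'a::euclidean_space \<Rightarrow> ennreal"
  assumes K: "K \<ge> 0"
    and bound: "\<And>x. f x \<le> ennreal (K / (real (nat \<lfloor>norm x\<rfloor>) + 1) ^ (DIM('a) + 2))"
  shows "(\<integral>\<^sup>+ x. f x \<partial>lborel) < \<infinity>"
proof -
  define N where "N = DIM('a)"
  define S where "S = (\<lambda>k::nat. {x::'a. real k \<le> norm x \<and> norm x < real k + 1})"
  define b where "b = (\<lambda>k::nat. K / (real k + 1) ^ (N + 2))"
  have Sm: "S k \<in> sets lborel" for k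
  proof -
    have "S k = {x. real k \<le> norm x} \<inter> {x. norm x < real k + 1}" by (auto simp: S_def)
    moreover have "closed {x::'a. real k \<le> norm x}" by (intro closed_Collect_le continuous_intros)
    moreover have "open {x::'a. norm x < real k + 1}" by (intro open_Collect_less continuous_intros)
    ultimately show ?thesis by auto
  qed
  have pw: "f x \<le> (\<Sum>k. ennreal (b k) * indicator (S k) x)" for x
  proof -
    define k0 where "k0 = nat \<lfloor>norm x\<rfloor>"
    have inS: "x \<in> S k \<longleftrightarrow> k = k0" for k
      unfolding S_def k0_def by (auto; linarith)
    have "(\<Sum>k. ennreal (b k) * indicator (S k) x) = (\<Sum>k\<in>{k0}. ennreal (b k) * indicator (S k) x)"
      by (rule suminf_finite) (auto simp: inS)
    also have "\<dots> = ennreal (b k0)" using inS by simp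
    finally show ?thesis using bound[of x] by (simp add: b_def k0_def N_def)
  qed
  have "(\<integral>\<^sup>+ x. f x \<partial>lborel) \<le> (\<integral>\<^sup>+ x. (\<Sum>k. ennreal (b k) * indicator (S k) x) \<partial>lborel)"
    by (intro nn_integral_mono pw)
  also have "\<dots> = (\<Sum>k. (\<integral>\<^sup>+ x. ennreal (b k) * indicator (S k) x \<partial>lborel))"
    using Sm by (intro nn_integral_suminf) auto
  also have "\<dots> = (\<Sum>k. ennreal (b k) * emeasure lborel (S k))"
    using Sm by (simp add: nn_integral_cmult_indicator)
  also have "\<dots> \<le> (\<Sum>k. ennreal (K * unit_ball_vol N / (real k + 1) ^ 2))"
  proof (intro suminf_le)
    fix k
    have "S k \<subseteq> cball 0 (real k + 1)" by (auto simp: S_def)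
    then have "emeasure lborel (S k) \<le> emeasure lborel (cball (0::'a) (real k + 1))"
      by (intro emeasure_mono) auto
    also have "\<dots> = ennreal (unit_ball_vol N * (real k + 1) ^ N)"
      by (subst emeasure_cball) (auto simp: N_def)
    finally have "ennreal (b k) * emeasure lborel (S k) \<le> ennreal (b k) * ennreal (unit_ball_vol N * (real k + 1) ^ N)"
      by (intro mult_left_mono) auto
    also have "\<dots> = ennreal (b k * (unit_ball_vol N * (real k + 1) ^ N))"
      by (rule ennreal_mult[symmetric]) (use K in \<open>auto simp: b_def\<close>)
    also have "b k * (unit_ball_vol N * (real k + 1) ^ N) = K * unit_ball_vol N / (real k + 1) ^ 2"
    proof -
      have p: "(real k + 1) ^ (N + 2) = (real k + 1) ^ N * (real k + 1) ^ 2" by (simp only: power_add)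
      have "(real k + 1) ^ N > 0" by simp
      then show ?thesis unfolding b_def p by (simp add: field_simps)
    qed
    finally show "ennreal (b k) * emeasure lborel (S k) \<le> ennreal (K * unit_ball_vol N / (real k + 1) ^ 2)" .
  qed auto
  also have "\<dots> < \<infinity>"
  proof -
    have "summable (\<lambda>k. inverse (real (Suc k) ^ 2))"
      using inverse_power_summable[of 2, where 'a=real] by (subst summable_Suc_iff) simp
    then have "summable (\<lambda>k. (K * unit_ball_vol N) * inverse (real (Suc k) ^ 2))"
      by (rule summable_mult)
    then have "summable (\<lambda>k. K * unit_ball_vol N / (real k + 1) ^ 2)"
      by (simp add: divide_inverse add.commute)
    then have "(\<Sum>k. ennreal (K * unit_ball_vol N / (real k + 1) ^ 2)) \<noteq> top"
      using K by (intro ennreal_suminf_neq_top) auto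
    then show ?thesis by (simp add: less_top)
  qed
  finally show ?thesis .
qed


lemma psi_deriv_lower:
  fixes \<psi> \<psi>' \<psi>'' :: "real \<Rightarrow> real"
  assumes d1: "\<And>\<rho>. \<rho> > 0 \<Longrightarrow> (\<psi> has_real_derivative \<psi>' \<rho>) (at \<rho>)"
    and d2: "\<And>\<rho>. \<rho> > 0 \<Longrightarrow> (\<psi>' has_real_derivative \<psi>'' \<rho>) (at \<rho>)"
    and conc: "\<And>\<rho>. \<rho> > 0 \<Longrightarrow> \<psi>'' \<rho> \<le> 0"
    and lim: "Liminf at_top (\<lambda>\<rho>. ereal (\<rho> * \<psi>' \<rho>)) > 0"
  obtains c \<rho>0 where "c > 0" "\<rho>0 \<ge> 1" "\<And>t. t > 0 \<Longrightarrow> \<psi>' t \<ge> c / max t \<rho>0"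
     "\<And>t. t \<ge> \<rho>0 \<Longrightarrow> \<psi> t \<ge> \<psi> \<rho>0 + c * ln (t / \<rho>0)"
proof -
  obtain c where c: "0 < ereal c" "ereal c < Liminf at_top (\<lambda>\<rho>. ereal (\<rho> * \<psi>' \<rho>))"
    using ereal_dense2[OF lim] by blast
  have "eventually (\<lambda>\<rho>. ereal c < ereal (\<rho> * \<psi>' \<rho>)) at_top"
    using less_LiminfD[OF c(2)] .
  then obtain r1 where r1: "\<And>\<rho>. \<rho> \<ge> r1 \<Longrightarrow> c < \<rho> * \<psi>' \<rho>"
    by (auto simp: eventually_at_top_linorder)
  define \<rho>0 where "\<rho>0 = max r1 1"
  have c0: "c > 0" using c by simp
  have r0: "\<rho>0 \<ge> 1" "\<rho>0 \<ge> r1" by (auto simp: \<rho>0_def)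
  have anti: "\<psi>' t \<le> \<psi>' s" if "0 < s" "s \<le> t" for s t
  proof (cases "s = t")
    case False
    then have "s < t" using that by simp
    from MVT2[OF this, of \<psi>' \<psi>''] d2 that obtain z where
      "s < z" "z < t" "\<psi>' t - \<psi>' s = (t - s) * \<psi>'' z" by force
    moreover have "\<psi>'' z \<le> 0" using conc \<open>s < z\<close> that by simp
    moreover have "(t - s) * \<psi>'' z \<le> 0" using \<open>s < t\<close> \<open>\<psi>'' z \<le> 0\<close> by (simp add: mult_nonneg_nonpos)
    ultimately show ?thesis by linarith
  qed simp
  have low: "\<psi>' t \<ge> c / max t \<rho>0" if "t > 0" for t
  proof (cases "t \<ge> \<rho>0")
    case True
    then have "c < t * \<psi>' t" using r1 r0 by simp
    then show ?thesis using True r0 by (simp add: max_def pos_divide_le_eq mult.commute)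
  next
    case False
    have "c < \<rho>0 * \<psi>' \<rho>0" using r1 r0 by simp
    then have "c / \<rho>0 \<le> \<psi>' \<rho>0" using r0 by (simp add: pos_divide_le_eq mult.commute)
    also have "\<dots> \<le> \<psi>' t" using anti[of t \<rho>0] False that by simp
    finally show ?thesis using False by (simp add: max_def)
  qed
  have lnb: "\<psi> t \<ge> \<psi> \<rho>0 + c * ln (t / \<rho>0)" if "t \<ge> \<rho>0" for t
  proof (cases "t = \<rho>0")
    case False
    then have lt: "\<rho>0 < t" using that by simp
    define h where "h = (\<lambda>x. \<psi> x - c * ln x)"
    have "\<And>x. \<rho>0 \<le> x \<Longrightarrow> x \<le> t \<Longrightarrow> (h has_real_derivative (\<psi>' x - c * (1/x))) (at x)"
      unfolding h_def using r0
      by (intro derivative_eq_intros d1) (auto intro!: d1)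
    from MVT2[OF lt, of h, OF this] obtain z where z: "\<rho>0 < z" "z < t"
      "h t - h \<rho>0 = (t - \<rho>0) * (\<psi>' z - c * (1/z))" by blast
    have "c / z \<le> \<psi>' z" using low[of z] z r0 by (simp add: max_def)
    then have "0 \<le> \<psi>' z - c * (1/z)" by simp
    then have "h t - h \<rho>0 \<ge> 0" using z lt by simp
    then show ?thesis using r0 lt unfolding h_def by (simp add: ln_div algebra_simps)
  qed simp
  show ?thesis using that c0 r0 low lnb by blast
qed


definition Vf :: "(real \<Rightarrow> real) \<Rightarrow> ('d::finite, 'n::finite) config \<Rightarrow> real" where
  "Vf \<psi> x = (\<Sum>i\<in>UNIV. \<psi> (norm (pos x i)))"

lemma weight_Vf: "weight \<psi> \<theta> x = exp (- (1 / \<theta>\<^sup>2) * Vf \<psi> x)"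
  by (simp add: weight_def Vf_def)

lemma cont_pos: "continuous_on UNIV (\<lambda>x::('d::finite,'n::finite) config. pos x i)"
  unfolding pos_def by (intro continuous_intros)

lemma cont_rad: "continuous_on UNIV (\<lambda>x::('d::finite,'n::finite) config. rad x i)"
  unfolding rad_def by (intro continuous_intros)

lemma confD_open: "open (confD R rm rp :: ('d::finite,'n::finite) config set)"
proof -
  have eq: "confD R rm rp = (\<Inter>i. {x::('d,'n) config. R + rad x i < norm (pos x i)} \<inter> {x. rm < rad x i} \<inter> {x. rad x i < rp})
     \<inter> (\<Inter>i. \<Inter>j. if i = j then UNIV else {x::('d,'n) config. rad x i + rad x j < norm (pos x i - pos x j)})"
    unfolding confD_def by (auto split: if_splits)
  have o1: "open {x::('d,'n) config. R + rad x i < norm (pos x i)}" for i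
    by (intro open_Collect_less continuous_intros cont_pos cont_rad)
  have o2: "open {x::('d,'n) config. rm < rad x i}" for i
    by (intro open_Collect_less continuous_intros cont_pos cont_rad)
  have o3: "open {x::('d,'n) config. rad x i < rp}" for i
    by (intro open_Collect_less continuous_intros cont_pos cont_rad)
  have o4: "open {x::('d,'n) config. rad x i + rad x j < norm (pos x i - pos x j)}" for i j
    by (intro open_Collect_less continuous_intros cont_pos cont_rad)
  show ?thesis unfolding eq using o1 o2 o3 o4 by (intro open_Int open_INT) auto
qed

lemma confD_nonempty:
  assumes "R > 0" "0 < rm" "rm < rp"
  shows "\<exists>x. x \<in> (confD R rm rp :: ('d::finite,'n::finite) config set)"
proof -
  obtain f :: "'n \<Rightarrow> nat" and m where f: "inj f"
    using finite_imp_inj_to_nat_seg[of "UNIV::'n set"] by auto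
  obtain e :: "real^'d" where e: "norm e = 1" using vector_choose_size[of 1] by auto
  define L where "L = R + 2 * rp + 1"
  define r0 where "r0 = (rm + rp) / 2"
  define x :: "('d,'n) config" where "x = (\<chi> i. ((real (f i + 1) * L) *\<^sub>R e, r0))"
  have p: "pos x i = (real (f i + 1) * L) *\<^sub>R e" for i by (simp add: x_def pos_def)
  have r: "rad x i = r0" for i by (simp add: x_def rad_def)
  have L: "L > 0" "L > R + r0" "L > 2 * r0" using assms by (auto simp: L_def r0_def)
  have "norm (pos x i) > R + rad x i" for i
  proof -
    have "L \<le> real (f i + 1) * L" using L by simp
    moreover have "norm (pos x i) = real (f i + 1) * L" using L by (simp add: p e)
    ultimately show ?thesis using L unfolding r by linarith
  qed
  moreover have "norm (pos x i - pos x j) > rad x i + rad x j" if "i \<noteq> j" for i j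
  proof -
    have ne: "f i \<noteq> f j" using f that by (auto dest: injD)
    have "pos x i - pos x j = ((real (f i) - real (f j)) * L) *\<^sub>R e"
      by (simp add: p algebra_simps)
    then have "norm (pos x i - pos x j) = \<bar>real (f i) - real (f j)\<bar> * L" using L e by (simp add: abs_mult)
    moreover have "\<bar>real (f i) - real (f j)\<bar> \<ge> 1" using ne by linarith
    ultimately have "norm (pos x i - pos x j) \<ge> L" using L
      by (metis mult_le_cancel_right1 order_less_imp_not_less)
    then show ?thesis using L r by simp
  qed
  ultimately have "x \<in> confD R rm rp" using assms
    by (auto simp: confD_def r r0_def)
  then show ?thesis by blast
qed


lemma D_pos_gt:
  assumes "x \<in> confD R rm rp" "0 < rm"
  shows "norm (pos x i) > R + rad x i" "rad x i > rm" "rad x i < rp" "norm (pos x i) > R"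
  using assms by (auto simp: confD_def) (smt (verit))

lemma V_ge_one:
  fixes x :: "('d::finite,'n::finite) config"
  assumes mono: "strict_mono_on {0<..} \<psi>" and "R > 0" "0 < rm" "x \<in> confD R rm rp"
  shows "Vf \<psi> x \<ge> \<psi> (norm (pos x i)) + (real CARD('n) - 1) * \<psi> R"
proof -
  have ge: "\<psi> R \<le> \<psi> (norm (pos x j))" for j
    using D_pos_gt(4)[OF assms(4,3), of j] assms(2)
    by (intro less_imp_le strict_mono_onD[OF mono]) auto
  have "Vf \<psi> x = \<psi> (norm (pos x i)) + (\<Sum>j\<in>UNIV - {i}. \<psi> (norm (pos x j)))"
    unfolding Vf_def by (simp add: sum.remove)
  moreover have "(\<Sum>j\<in>UNIV - {i}. \<psi> (norm (pos x j))) \<ge> of_nat (card (UNIV - {i} :: 'n set)) * \<psi> R"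
    using ge by (intro sum_bounded_below) auto
  moreover have "real (card (UNIV - {i} :: 'n set)) = real CARD('n) - 1"
    by (simp add: card_Diff_singleton of_nat_diff Suc_leI)
  ultimately show ?thesis by simp
qed

lemma V_ge_all:
  fixes x :: "('d::finite,'n::finite) config"
  assumes mono: "strict_mono_on {0<..} \<psi>" and "R > 0" "0 < rm" "x \<in> confD R rm rp"
  shows "Vf \<psi> x \<ge> real CARD('n) * \<psi> R"
proof -
  have "\<psi> R \<le> \<psi> (norm (pos x i))" for i
    using D_pos_gt(4)[OF assms(4,3), of i] assms(2)
    by (intro less_imp_le strict_mono_onD[OF mono]) auto
  then have "\<psi> R \<le> \<psi> (norm (pos x undefined))" .
  then show ?thesis using V_ge_one[OF assms, of undefined] by (simp add: algebra_simps)
qed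

lemma norm_bound:
  fixes x :: "('d::finite,'n::finite) config"
  assumes "x \<in> confD R rm rp" "0 < rm"
  shows "\<exists>i. norm (pos x i) \<ge> norm x / real CARD('n) - rp"
proof -
  define g where "g = (\<lambda>i. norm (x $ i))"
  have "Max (range g) \<in> range g" by (intro Max_in) auto
  then obtain i0 where i0: "g i0 = Max (range g)" by (metis imageE)
  have gi: "g j \<le> g i0" for j unfolding i0 by (intro Max_ge) auto
  have "norm x \<le> (\<Sum>i\<in>UNIV. g i)" unfolding norm_vec_def g_def
    by (intro L2_set_le_sum) auto
  also have "\<dots> \<le> of_nat (card (UNIV::'n set)) * g i0" using gi by (intro sum_bounded_above) auto
  finally have n1: "norm x / real CARD('n) \<le> g i0" by (simp add: divide_le_eq mult.commute)
  have "g i0 \<le> norm (pos x i0) + norm (rad x i0)" unfolding g_def pos_def rad_def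
    by (metis norm_Pair_le prod.collapse)
  moreover have "norm (rad x i0) < rp" using D_pos_gt[OF assms, of i0] assms(2) by simp
  ultimately show ?thesis using n1 by (intro exI[of _ i0]) linarith
qed


lemma weight_bound:
  fixes \<psi> :: "real \<Rightarrow> real" and N :: nat
  assumes mono: "strict_mono_on {0<..} \<psi>" and R: "R > 0" and rm: "0 < rm"
    and c: "c > 0" and r0: "\<rho>0 \<ge> 1"
    and lnb: "\<And>t. t \<ge> \<rho>0 \<Longrightarrow> \<psi> t \<ge> \<psi> \<rho>0 + c * ln (t / \<rho>0)"
    and th: "1 / \<theta>1\<^sup>2 = real (N + 2) / c"
  shows "\<exists>K\<ge>0. \<forall>x\<in>(confD R rm rp :: ('d::finite,'n::finite) config set).
            weight \<psi> \<theta>1 x \<le> K / (real (nat \<lfloor>norm x\<rfloor>) + 1) ^ (N + 2)"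
proof -
  define q where "q = real CARD('n)"
  define p where "p = real (N + 2) / c"
  have q1: "q \<ge> 1" by (simp add: q_def)
  have p0: "p > 0" using c by (simp add: p_def)
  define T where "T = 2 * q * (\<bar>rp\<bar> + \<rho>0)"
  have T1: "T \<ge> 1" unfolding T_def using q1 r0
    by (smt (verit, best) mult_le_cancel_left1)
  define E0 where "E0 = exp (- p * (q * \<psi> R))"
  define E1 where "E1 = exp (- p * (\<psi> \<rho>0 + (q - 1) * \<psi> R))"
  define K where "K = E0 * (T + 1) ^ (N + 2) + E1 * (4 * q * \<rho>0) ^ (N + 2)"
  have K0: "K \<ge> 0" using q1 r0 T1 by (simp add: K_def E0_def E1_def)
  have wV: "weight \<psi> \<theta>1 x = exp (- p * Vf \<psi> x)" for x :: "('d,'n) config"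
    by (simp add: weight_Vf th p_def)
  show ?thesis
  proof (intro exI[of _ K] conjI ballI K0)
    fix x :: "('d,'n) config" assume xD: "x \<in> confD R rm rp"
    define s where "s = norm x"
    define k where "k = real (nat \<lfloor>s\<rfloor>) + 1"
    have s0: "s \<ge> 0" by (simp add: s_def)
    have k1: "k \<le> s + 1" "k > s" "k \<ge> 1" using s0 unfolding k_def by linarith+
    have Vge: "Vf \<psi> x \<ge> q * \<psi> R" using V_ge_all[OF mono R rm xD] by (simp add: q_def)
    have "weight \<psi> \<theta>1 x \<le> K / k ^ (N + 2)"
    proof (cases "s < T")
      case True
      have "weight \<psi> \<theta>1 x \<le> E0" unfolding wV E0_def using Vge p0 by simp
      also have "E0 = E0 * (T + 1) ^ (N + 2) / (T + 1) ^ (N + 2)" using T1 by simp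
      also have "\<dots> \<le> E0 * (T + 1) ^ (N + 2) / k ^ (N + 2)"
        using k1 True T1 by (intro divide_left_mono power_mono mult_pos_pos) (auto simp: E0_def)
      also have "\<dots> \<le> K / k ^ (N + 2)"
        using k1 r0 q1 by (intro divide_right_mono) (auto simp: K_def E1_def)
      finally show ?thesis .
    next
      case False
      obtain i where i: "norm (pos x i) \<ge> s / q - rp" using norm_bound[OF xD rm] by (auto simp: s_def q_def)
      define t where "t = s / q - rp"
      have sT: "s \<ge> T" using False by simp
      have "s / q \<ge> 2 * (\<bar>rp\<bar> + \<rho>0)" using sT q1 by (simp add: T_def field_simps)
      have "s / (2 * q) = (s / q) / 2" by simp
      have "s / q / 2 \<le> s / q - rp"
      proof -
        define u where "u = s / q"
        have "u \<ge> 2 * (\<bar>rp\<bar> + \<rho>0)" using \<open>s / q \<ge> 2 * (\<bar>rp\<bar> + \<rho>0)\<close> by (simp add: u_def)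
        then have "u \<ge> 2 * \<bar>rp\<bar> + 2 * \<rho>0" by (simp add: algebra_simps)
        then have "u / 2 \<le> u - rp" using r0 abs_ge_self[of rp] by linarith
        then show ?thesis by (simp add: u_def)
      qed
      with \<open>s / (2 * q) = s / q / 2\<close> have t1a: "t \<ge> s / (2 * q)" unfolding t_def by simp
      have t1b: "t \<ge> \<rho>0"
      proof -
        define u where "u = s / q"
        have "u \<ge> 2 * (\<bar>rp\<bar> + \<rho>0)" using \<open>s / q \<ge> 2 * (\<bar>rp\<bar> + \<rho>0)\<close> by (simp add: u_def)
        then have "u \<ge> 2 * \<bar>rp\<bar> + 2 * \<rho>0" by (simp add: algebra_simps)
        then have "\<rho>0 \<le> u - rp" using r0 abs_ge_self[of rp] by linarith
        then show ?thesis by (simp add: u_def t_def)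
      qed
      note t1 = t1a t1b
      have tpos: "t > 0" using t1 r0 by simp
      have "\<psi> t \<le> \<psi> (norm (pos x i))"
      proof (cases "t = norm (pos x i)")
        case False
        then show ?thesis using i tpos unfolding t_def[symmetric]
          by (intro less_imp_le strict_mono_onD[OF mono]) auto
      qed simp
      then have V1: "Vf \<psi> x \<ge> \<psi> \<rho>0 + c * ln (t / \<rho>0) + (q - 1) * \<psi> R"
        using V_ge_one[OF mono R rm xD, of i] lnb[OF t1(2)] by (simp add: q_def)
      have "weight \<psi> \<theta>1 x \<le> exp (- p * (\<psi> \<rho>0 + c * ln (t / \<rho>0) + (q - 1) * \<psi> R))"
        unfolding wV using V1 p0 by simp
      also have "\<dots> = E1 * exp (real (N + 2) * ln (\<rho>0 / t))"
        unfolding E1_def p_def using c r0 tpos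
        by (simp add: exp_add[symmetric] ln_div field_simps)
      also have "exp (real (N + 2) * ln (\<rho>0 / t)) = (\<rho>0 / t) ^ (N + 2)"
        using r0 tpos by (simp only: exp_of_nat_mult, subst exp_ln) auto
      also have "\<rho>0 / t \<le> 4 * q * \<rho>0 / k"
      proof -
        have "k \<le> 2 * s" using k1 sT T1 by linarith
        have "\<rho>0 / t \<le> \<rho>0 / (s / (2 * q))"
          using t1 tpos r0 q1 sT T1 by (intro divide_left_mono) auto
        also have "\<dots> = 2 * q * \<rho>0 / s" using q1 by (simp add: field_simps)
        also have "\<dots> \<le> 2 * q * \<rho>0 / (k / 2)"
          using \<open>k \<le> 2 * s\<close> k1 q1 r0 by (intro divide_left_mono) auto
        finally show ?thesis by simp
      qed
      then have "E1 * (\<rho>0 / t) ^ (N + 2) \<le> E1 * (4 * q * \<rho>0 / k) ^ (N + 2)"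
        using tpos r0 by (intro mult_left_mono power_mono) (auto simp: E1_def)
      also have "\<dots> = E1 * (4 * q * \<rho>0) ^ (N + 2) / k ^ (N + 2)" by (simp add: power_divide)
      also have "\<dots> \<le> K / k ^ (N + 2)"
        using k1 T1 by (intro divide_right_mono) (auto simp: K_def E0_def)
      finally show ?thesis by simp
    qed
    then show "weight \<psi> \<theta>1 x \<le> K / (real (nat \<lfloor>norm x\<rfloor>) + 1) ^ (N + 2)"
      by (simp add: k_def s_def)
  qed
qed


lemma psi_incr:
  fixes \<psi> \<psi>' :: "real \<Rightarrow> real"
  assumes d1: "\<And>\<rho>. \<rho> > 0 \<Longrightarrow> (\<psi> has_real_derivative \<psi>' \<rho>) (at \<rho>)"
    and low: "\<And>t. t > 0 \<Longrightarrow> \<psi>' t \<ge> c / max t \<rho>0" and c: "c > 0" and r0: "\<rho>0 \<ge> 1"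
    and ab: "0 < a" "a < b"
  shows "\<psi> b - \<psi> a \<ge> (b - a) * (c / max b \<rho>0)"
proof -
  from MVT2[OF ab(2), of \<psi> \<psi>'] d1 ab obtain z where z: "a < z" "z < b" "\<psi> b - \<psi> a = (b - a) * \<psi>' z"
    by force
  have "c / max b \<rho>0 \<le> c / max z \<rho>0" using z c r0 ab
    by (intro divide_left_mono) (auto simp: max_def)
  also have "\<dots> \<le> \<psi>' z" using low[of z] z ab by simp
  finally have "(b - a) * (c / max b \<rho>0) \<le> (b - a) * \<psi>' z" using z ab by (intro mult_left_mono) auto
  then show ?thesis using z by simp
qed

lemma Vf_isCont:
  fixes \<psi> \<psi>' :: "real \<Rightarrow> real"
  assumes d1: "\<And>\<rho>. \<rho> > 0 \<Longrightarrow> (\<psi> has_real_derivative \<psi>' \<rho>) (at \<rho>)"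
    and xD: "x \<in> (confD R rm rp :: ('d::finite,'n::finite) config set)" and R: "R > 0" and rm: "0 < rm"
  shows "isCont (Vf \<psi>) x"
proof -
  have "isCont (\<lambda>x. \<psi> (norm (pos x i))) x" for i
  proof (rule isCont_o2[where f = "\<lambda>x. norm (pos x i)"])
    show "isCont (\<lambda>x. norm (pos x i)) x"
      using cont_pos[of i] by (intro continuous_intros) (simp add: continuous_on_eq_continuous_at, blast)
    have "norm (pos x i) > 0" using D_pos_gt(4)[OF xD rm, of i] R by linarith
    then show "isCont \<psi> (norm (pos x i))" using d1 DERIV_isCont by blast
  qed
  then show ?thesis unfolding Vf_def[abs_def] by (intro isCont_sum) auto
qed

lemma weight_meas:
  fixes \<psi> \<psi>' :: "real \<Rightarrow> real"
  assumes d1: "\<And>\<rho>. \<rho> > 0 \<Longrightarrow> (\<psi> has_real_derivative \<psi>' \<rho>) (at \<rho>)"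
    and R: "R > 0" and rm: "0 < rm"
  shows "(\<lambda>x. indicator (confD R rm rp :: ('d::finite,'n::finite) config set) x * ennreal (weight \<psi> \<theta> x))
           \<in> borel_measurable lborel"
proof -
  let ?D = "confD R rm rp :: ('d,'n) config set"
  have "continuous_on ?D (weight \<psi> \<theta>)"
  proof (intro continuous_at_imp_continuous_on ballI)
    fix x assume "x \<in> ?D"
    then have "isCont (Vf \<psi>) x" using Vf_isCont[OF d1 _ R rm] by blast
    then show "isCont (weight \<psi> \<theta>) x" unfolding weight_Vf[abs_def]
      by (intro continuous_intros)
  qed
  then have "(\<lambda>x. indicator ?D x *\<^sub>R weight \<psi> \<theta> x) \<in> borel_measurable borel"
    using confD_open[of R rm rp] by (intro borel_measurable_continuous_on_indicator borel_open) auto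
  then have "(\<lambda>x. ennreal (indicator ?D x *\<^sub>R weight \<psi> \<theta> x)) \<in> borel_measurable lborel"
    by simp
  moreover have "ennreal (indicator ?D x *\<^sub>R weight \<psi> \<theta> x) = indicator ?D x * ennreal (weight \<psi> \<theta> x)" for x
    by (simp add: indicator_def)
  ultimately show ?thesis by simp
qed

lemma domination:
  fixes \<psi> \<psi>' :: "real \<Rightarrow> real"
  assumes d1: "\<And>\<rho>. \<rho> > 0 \<Longrightarrow> (\<psi> has_real_derivative \<psi>' \<rho>) (at \<rho>)"
    and R: "R > 0" and rm: "0 < rm"
    and th: "0 < \<theta>" "\<theta> \<le> \<theta>1"
    and S: "S \<subseteq> (confD R rm rp :: ('d::finite,'n::finite) config set)"
    and a: "\<And>x. x \<in> S \<Longrightarrow> a \<le> Vf \<psi> x"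
  shows "wint \<psi> \<theta> S \<le> ennreal (exp (- a / \<theta>\<^sup>2) * exp (a / \<theta>1\<^sup>2)) * wint \<psi> \<theta>1 (confD R rm rp :: ('d,'n) config set)"
proof -
  let ?D = "confD R rm rp :: ('d,'n) config set"
  define C where "C = exp (- a / \<theta>\<^sup>2) * exp (a / \<theta>1\<^sup>2)"
  have ii: "1 / \<theta>1\<^sup>2 \<le> 1 / \<theta>\<^sup>2" using th by (intro divide_left_mono power_mono mult_pos_pos) auto
  have pw: "indicator S x * ennreal (weight \<psi> \<theta> x) \<le> ennreal C * (indicator ?D x * ennreal (weight \<psi> \<theta>1 x))" for x
  proof (cases "x \<in> S")
    case True
    then have xD: "x \<in> ?D" using S by auto
    have "(Vf \<psi> x - a) * (1 / \<theta>1\<^sup>2) \<le> (Vf \<psi> x - a) * (1 / \<theta>\<^sup>2)"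
      using a[OF True] ii by (intro mult_left_mono) auto
    then have "- (1 / \<theta>\<^sup>2) * Vf \<psi> x \<le> - a / \<theta>\<^sup>2 + a / \<theta>1\<^sup>2 + - (1 / \<theta>1\<^sup>2) * Vf \<psi> x"
      by (simp add: algebra_simps diff_divide_distrib)
    then have "weight \<psi> \<theta> x \<le> C * weight \<psi> \<theta>1 x"
      unfolding weight_Vf C_def by (simp add: exp_add[symmetric])
    then show ?thesis using True xD by (simp add: ennreal_mult'[symmetric] C_def ennreal_leI)
  qed simp
  have "wint \<psi> \<theta> S \<le> (\<integral>\<^sup>+ x. ennreal C * (indicator ?D x * ennreal (weight \<psi> \<theta>1 x)) \<partial>lborel)"
    unfolding wint_def by (intro nn_integral_mono pw)
  also have "\<dots> = ennreal C * wint \<psi> \<theta>1 ?D"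
    unfolding wint_def by (intro nn_integral_cmult weight_meas[OF d1 R rm])
  finally show ?thesis by (simp add: C_def)
qed


lemma Aeps_V:
  fixes \<psi> \<psi>' :: "real \<Rightarrow> real"
  assumes mono: "strict_mono_on {0<..} \<psi>"
    and d1: "\<And>\<rho>. \<rho> > 0 \<Longrightarrow> (\<psi> has_real_derivative \<psi>' \<rho>) (at \<rho>)"
    and low: "\<And>t. t > 0 \<Longrightarrow> \<psi>' t \<ge> c / max t \<rho>0" and c: "c > 0" and r0: "\<rho>0 \<ge> 1"
    and R: "R > 0" and rm: "0 < rm" and eps: "\<epsilon> > 0" and M: "M \<ge> \<rho>0"
    and hM: "\<psi> M + (real CARD('n) - 1) * \<psi> R \<ge> Vs + 1"
    and Vs: "\<And>y. y \<in> (confD R rm rp :: ('d::finite,'n::finite) config set) \<Longrightarrow> Vs \<le> Vf \<psi> y"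
    and xA: "x \<in> (Aeps R rm rp \<epsilon> :: ('d,'n) config set)"
  shows "Vf \<psi> x \<ge> Vs + min 1 (\<epsilon> * c / M)"
proof -
  from xA obtain y k where xD: "x \<in> confD R rm rp" and yD: "y \<in> confD R rm rp"
    and eq: "\<And>i. i \<noteq> k \<Longrightarrow> pos y i = pos x i" and lt: "norm (pos y k) < norm (pos x k) - \<epsilon>"
    unfolding Aeps_def by blast
  have M0: "M > 0" using M r0 by simp
  show ?thesis
  proof (cases "norm (pos x k) \<ge> M")
    case True
    have "\<psi> M \<le> \<psi> (norm (pos x k))"
    proof (cases "M = norm (pos x k)")
      case False
      then show ?thesis using True M0 by (intro less_imp_le strict_mono_onD[OF mono]) auto
    qed simp
    then have "Vf \<psi> x \<ge> Vs + 1" using V_ge_one[OF mono R rm xD, of k] hM by linarith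
    then show ?thesis by linarith
  next
    case False
    have split: "Vf \<psi> z = \<psi> (norm (pos z k)) + (\<Sum>j\<in>UNIV - {k}. \<psi> (norm (pos z j)))" for z :: "('d,'n) config"
      unfolding Vf_def by (simp add: sum.remove)
    have "(\<Sum>j\<in>UNIV - {k}. \<psi> (norm (pos y j))) = (\<Sum>j\<in>UNIV - {k}. \<psi> (norm (pos x j)))"
      using eq by (intro sum.cong) auto
    then have diff: "Vf \<psi> x - Vf \<psi> y = \<psi> (norm (pos x k)) - \<psi> (norm (pos y k))"
      using split[of x] split[of y] by simp
    define a where "a = norm (pos x k) - \<epsilon>"
    have ypos: "norm (pos y k) > 0" using D_pos_gt(4)[OF yD rm, of k] R by linarith
    have a0: "0 < a" "a < norm (pos x k)" using ypos lt eps unfolding a_def by linarith+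
    have "\<psi> (norm (pos y k)) \<le> \<psi> a"
      using lt ypos a0 by (intro less_imp_le strict_mono_onD[OF mono]) (auto simp: a_def)
    moreover have "\<psi> (norm (pos x k)) - \<psi> a \<ge> (norm (pos x k) - a) * (c / max (norm (pos x k)) \<rho>0)"
      by (rule psi_incr[OF d1 low c r0 a0])
    moreover have "(norm (pos x k) - a) * (c / max (norm (pos x k)) \<rho>0) \<ge> \<epsilon> * c / M"
    proof -
      have "c / M \<le> c / max (norm (pos x k)) \<rho>0"
      proof -
        have "max (norm (pos x k)) \<rho>0 \<le> M" "max (norm (pos x k)) \<rho>0 > 0" using False M r0 by auto
        then show ?thesis using c by (intro divide_left_mono) auto
      qed
      then have "\<epsilon> * (c / M) \<le> \<epsilon> * (c / max (norm (pos x k)) \<rho>0)" using eps by (intro mult_left_mono) auto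
      then show ?thesis by (simp add: a_def)
    qed
    moreover have "Vs \<le> Vf \<psi> y" using Vs[OF yD] .
    ultimately have "Vf \<psi> x \<ge> Vs + \<epsilon> * c / M" using diff by linarith
    then show ?thesis by linarith
  qed
qed


theorem proposition3:
  fixes \<psi> \<psi>' \<psi>'' :: "real \<Rightarrow> real" and R rm rp \<epsilon> :: real
  assumes "R > 0" and "0 < rm" and "rm < rp"
    and "\<And>\<rho>. \<rho> > 0 \<Longrightarrow> (\<psi> has_real_derivative \<psi>' \<rho>) (at \<rho>)"
    and "\<And>\<rho>. \<rho> > 0 \<Longrightarrow> (\<psi>' has_real_derivative \<psi>'' \<rho>) (at \<rho>)"
    and "continuous_on {0<..} \<psi>''"
    and "strict_mono_on {0<..} \<psi>"
    and "\<And>\<rho>. \<rho> > 0 \<Longrightarrow> \<psi>'' \<rho> \<le> 0"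
    and "Liminf at_top (\<lambda>\<rho>. ereal (\<rho> * \<psi>' \<rho>)) > 0"
    and "\<epsilon> > 0"
  shows "(\<forall>\<^sub>F \<theta> in at_right 0.
            wint \<psi> \<theta> (confD R rm rp :: ('d::finite, 'n::finite) config set) < \<infinity>)
         \<and> ((\<lambda>\<theta>. mu \<psi> R rm rp \<theta> (Aeps R rm rp \<epsilon> :: ('d, 'n) config set))
              \<longlongrightarrow> 0) (at_right 0)"
proof -
  note R = assms(1) and rm = assms(2) and rmp = assms(3) and d1 = assms(4) and d2 = assms(5)
    and mono = assms(7) and conc = assms(8) and lim = assms(9) and eps = assms(10)
  obtain c \<rho>0 where c: "c > 0" and r0: "\<rho>0 \<ge> 1" and low: "\<And>t. t > 0 \<Longrightarrow> \<psi>' t \<ge> c / max t \<rho>0"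
     and lnb: "\<And>t. t \<ge> \<rho>0 \<Longrightarrow> \<psi> t \<ge> \<psi> \<rho>0 + c * ln (t / \<rho>0)"
    using psi_deriv_lower[OF d1 d2 conc lim] by blast
  let ?D = "confD R rm rp :: ('d,'n) config set"
  define q where "q = real CARD('n)"
  define N where "N = DIM(('d,'n) config)"
  define \<theta>1 where "\<theta>1 = sqrt (c / real (N + 2))"
  have th1: "\<theta>1 > 0" using c by (simp add: \<theta>1_def)
  have th1sq: "1 / \<theta>1\<^sup>2 = real (N + 2) / c" using c by (simp add: \<theta>1_def)
  obtain K where K: "K \<ge> 0" and Kb: "\<And>x. x \<in> ?D \<Longrightarrow> weight \<psi> \<theta>1 x \<le> K / (real (nat \<lfloor>norm x\<rfloor>) + 1) ^ (N + 2)"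
    using weight_bound[OF mono R rm c r0 lnb th1sq, where 'd='d and 'n='n and rp=rp] by blast
  have I1fin: "wint \<psi> \<theta>1 ?D < \<infinity>"
    unfolding wint_def
  proof (rule radial_finite[OF K])
    fix x :: "('d,'n) config"
    show "indicator ?D x * ennreal (weight \<psi> \<theta>1 x) \<le> ennreal (K / (real (nat \<lfloor>norm x\<rfloor>) + 1) ^ (DIM(('d,'n) config) + 2))"
      using Kb[of x] by (cases "x \<in> ?D") (auto simp: N_def intro: ennreal_leI)
  qed
  have fin_all: "wint \<psi> \<theta> ?D < \<infinity>" if "0 < \<theta>" "\<theta> \<le> \<theta>1" for \<theta>
  proof -
    have "wint \<psi> \<theta> ?D \<le> ennreal (exp (- (q * \<psi> R) / \<theta>\<^sup>2) * exp ((q * \<psi> R) / \<theta>1\<^sup>2)) * wint \<psi> \<theta>1 ?D"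
      by (rule domination[OF d1 R rm that]) (use V_ge_all[OF mono R rm] in \<open>auto simp: q_def\<close>)
    also have "\<dots> < \<infinity>" using I1fin by (simp add: ennreal_mult_less_top)
    finally show ?thesis .
  qed
  have ev: "\<forall>\<^sub>F \<theta> in at_right 0. 0 < \<theta> \<and> \<theta> \<le> \<theta>1"
    unfolding eventually_at_right_field using th1 by (intro exI[of _ \<theta>1]) auto
  have part1: "\<forall>\<^sub>F \<theta> in at_right 0. wint \<psi> \<theta> ?D < \<infinity>"
    using ev by eventually_elim (use fin_all in auto)
  obtain x1 where x1: "x1 \<in> ?D" using confD_nonempty[OF R rm rmp] by blast
  define Vs where "Vs = Inf (Vf \<psi> ` ?D)"
  have bdd: "bdd_below (Vf \<psi> ` ?D)"
    using V_ge_all[OF mono R rm] by (intro bdd_belowI[of _ "q * \<psi> R"]) (auto simp: q_def)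
  have Vs_le: "Vs \<le> Vf \<psi> y" if "y \<in> ?D" for y
    unfolding Vs_def using bdd that by (intro cInf_lower) auto
  define M where "M = \<rho>0 * exp (\<bar>Vs + 1 - (q - 1) * \<psi> R - \<psi> \<rho>0\<bar> / c)"
  have M: "M \<ge> \<rho>0" using r0 c by (simp add: M_def)
  have hM: "\<psi> M + (q - 1) * \<psi> R \<ge> Vs + 1"
  proof -
    have "ln (M / \<rho>0) = \<bar>Vs + 1 - (q - 1) * \<psi> R - \<psi> \<rho>0\<bar> / c" using r0 by (simp add: M_def)
    then have "\<psi> M \<ge> \<psi> \<rho>0 + \<bar>Vs + 1 - (q - 1) * \<psi> R - \<psi> \<rho>0\<bar>" using lnb[OF M] c by simp
    then show ?thesis by linarith
  qed
  define \<eta> where "\<eta> = min 1 (\<epsilon> * c / M)"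
  have eta: "\<eta> > 0" using eps c M r0 by (simp add: \<eta>_def)
  have Av: "Vf \<psi> x \<ge> Vs + \<eta>" if "x \<in> (Aeps R rm rp \<epsilon> :: ('d,'n) config set)" for x
    unfolding \<eta>_def by (rule Aeps_V[OF mono d1 low c r0 R rm eps M _ Vs_le that]) (use hM in \<open>unfold q_def\<close>)
  have "Inf (Vf \<psi> ` ?D) < Vs + \<eta> / 4" using eta by (simp add: Vs_def)
  then obtain x0 where x0: "x0 \<in> ?D" "Vf \<psi> x0 < Vs + \<eta> / 4"
    using cInf_lessD[of "Vf \<psi> ` ?D"] x1 by blast
  have "isCont (Vf \<psi>) x0" by (rule Vf_isCont[OF d1 x0(1) R rm])
  then have "\<forall>\<^sub>F y in at x0. Vf \<psi> y < Vs + \<eta> / 2"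
    using x0 eta unfolding isCont_def by (intro order_tendstoD(2)) auto
  then obtain d0 where d0: "d0 > 0" "\<And>y. y \<noteq> x0 \<Longrightarrow> dist y x0 < d0 \<Longrightarrow> Vf \<psi> y < Vs + \<eta> / 2"
    unfolding eventually_at by blast
  obtain d1' where d1': "d1' > 0" "ball x0 d1' \<subseteq> ?D"
    using confD_open[of R rm rp] x0(1) open_contains_ball by blast
  define \<delta> where "\<delta> = min d0 d1' / 2"
  have \<delta>0: "\<delta> > 0" using d0 d1' by (simp add: \<delta>_def)
  define B where "B = cball x0 \<delta>"
  have BD: "B \<subseteq> ?D" using d1' \<delta>0 unfolding B_def \<delta>_def by (auto simp: dist_commute)
  have BV: "Vf \<psi> y \<le> Vs + \<eta> / 2" if "y \<in> B" for y
  proof (cases "y = x0")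
    case True then show ?thesis using x0 eta by simp
  next
    case False
    have "dist y x0 < d0" using that d0 \<delta>0 unfolding B_def \<delta>_def by (auto simp: dist_commute)
    then show ?thesis using d0(2)[OF False] by simp
  qed
  define vB where "vB = unit_ball_vol (real N) * \<delta> ^ N"
  have vB0: "vB > 0" using \<delta>0 by (simp add: vB_def)
  have embB: "emeasure lborel B = ennreal vB" unfolding B_def vB_def N_def
    using \<delta>0 by (subst emeasure_cball) auto
  define b where "b = Vs + \<eta> / 2"
  have lower: "wint \<psi> \<theta> ?D \<ge> ennreal (vB * exp (- b / \<theta>\<^sup>2))" if "\<theta> > 0" for \<theta>
  proof -
    have pw: "ennreal (exp (- b / \<theta>\<^sup>2)) * indicator B x \<le> indicator ?D x * ennreal (weight \<psi> \<theta> x)" for x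
    proof (cases "x \<in> B")
      case True
      then have "Vf \<psi> x \<le> b" using BV by (simp add: b_def)
      then have "- b / \<theta>\<^sup>2 \<le> - (1 / \<theta>\<^sup>2) * Vf \<psi> x" using that
        by (simp add: divide_right_mono)
      then have "exp (- b / \<theta>\<^sup>2) \<le> weight \<psi> \<theta> x" unfolding weight_Vf by simp
      moreover have "x \<in> ?D" using True BD by auto
      ultimately show ?thesis using True by (simp add: ennreal_leI)
    qed simp
    have "(\<integral>\<^sup>+ x. ennreal (exp (- b / \<theta>\<^sup>2)) * indicator B x \<partial>lborel) \<le> wint \<psi> \<theta> ?D"
      unfolding wint_def by (intro nn_integral_mono pw)
    moreover have "(\<integral>\<^sup>+ x. ennreal (exp (- b / \<theta>\<^sup>2)) * indicator B x \<partial>lborel) = ennreal (vB * exp (- b / \<theta>\<^sup>2))"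
    proof -
      have "B \<in> sets lborel" unfolding B_def by simp
      then have "(\<integral>\<^sup>+ x. ennreal (exp (- b / \<theta>\<^sup>2)) * indicator B x \<partial>lborel) = ennreal (exp (- b / \<theta>\<^sup>2)) * emeasure lborel B"
        by (rule nn_integral_cmult_indicator)
      then show ?thesis using vB0 by (simp add: embB ennreal_mult mult.commute)
    qed
    ultimately show ?thesis by simp
  qed
  define a where "a = Vs + \<eta>"
  define J where "J = enn2real (wint \<psi> \<theta>1 ?D)"
  have J: "wint \<psi> \<theta>1 ?D = ennreal J" "J \<ge> 0" using I1fin by (auto simp: J_def less_top ennreal_enn2real)
  define C where "C = exp (a / \<theta>1\<^sup>2) * J / vB"
  have mubound: "mu \<psi> R rm rp \<theta> (Aeps R rm rp \<epsilon> :: ('d, 'n) config set) \<le> C * exp (- (\<eta> / 2) / \<theta>\<^sup>2)"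
    if th: "0 < \<theta>" "\<theta> \<le> \<theta>1" for \<theta>
  proof -
    let ?A = "Aeps R rm rp \<epsilon> :: ('d, 'n) config set"
    have "wint \<psi> \<theta> (?A \<inter> ?D) \<le> ennreal (exp (- a / \<theta>\<^sup>2) * exp (a / \<theta>1\<^sup>2)) * wint \<psi> \<theta>1 ?D"
      by (rule domination[OF d1 R rm th]) (use Av in \<open>auto simp: a_def\<close>)
    also have "\<dots> = ennreal (exp (- a / \<theta>\<^sup>2) * exp (a / \<theta>1\<^sup>2) * J)" using J by (simp add: ennreal_mult)
    finally have "enn2real (wint \<psi> \<theta> (?A \<inter> ?D)) \<le> enn2real (ennreal (exp (- a / \<theta>\<^sup>2) * exp (a / \<theta>1\<^sup>2) * J))"
      by (rule enn2real_mono) simp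
    then have num: "enn2real (wint \<psi> \<theta> (?A \<inter> ?D)) \<le> exp (- a / \<theta>\<^sup>2) * exp (a / \<theta>1\<^sup>2) * J"
      using J by simp
    have "enn2real (ennreal (vB * exp (- b / \<theta>\<^sup>2))) \<le> enn2real (wint \<psi> \<theta> ?D)"
      using lower[OF th(1)] fin_all[OF th] by (intro enn2real_mono) auto
    then have den: "enn2real (wint \<psi> \<theta> ?D) \<ge> vB * exp (- b / \<theta>\<^sup>2)" using vB0 by simp
    have dpos: "vB * exp (- b / \<theta>\<^sup>2) > 0" using vB0 by simp
    have "mu \<psi> R rm rp \<theta> ?A = enn2real (wint \<psi> \<theta> (?A \<inter> ?D)) / enn2real (wint \<psi> \<theta> ?D)"
      by (simp add: mu_def)
    also have "\<dots> \<le> (exp (- a / \<theta>\<^sup>2) * exp (a / \<theta>1\<^sup>2) * J) / (vB * exp (- b / \<theta>\<^sup>2))"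
      using num den dpos J by (intro frac_le) auto
    also have "\<dots> = C * (exp (- a / \<theta>\<^sup>2) / exp (- b / \<theta>\<^sup>2))"
      using vB0 by (simp add: C_def field_simps)
    also have "exp (- a / \<theta>\<^sup>2) / exp (- b / \<theta>\<^sup>2) = exp (- (\<eta> / 2) / \<theta>\<^sup>2)"
      using th by (simp add: exp_diff[symmetric] a_def b_def field_simps)
    finally show ?thesis .
  qed
  have lim0: "((\<lambda>\<theta>::real. exp (- (\<eta> / 2) / \<theta>\<^sup>2)) \<longlongrightarrow> 0) (at_right 0)"
    using eta by real_asymp
  have "((\<lambda>\<theta>. mu \<psi> R rm rp \<theta> (Aeps R rm rp \<epsilon> :: ('d, 'n) config set)) \<longlongrightarrow> 0) (at_right 0)"
  proof (rule tendsto_sandwich[where f = "\<lambda>_. 0" and h = "\<lambda>\<theta>. C * exp (- (\<eta> / 2) / \<theta>\<^sup>2)"])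
    show "\<forall>\<^sub>F \<theta> in at_right 0. 0 \<le> mu \<psi> R rm rp \<theta> (Aeps R rm rp \<epsilon> :: ('d, 'n) config set)"
      by (intro always_eventually allI) (simp add: mu_def)
    show "\<forall>\<^sub>F \<theta> in at_right 0. mu \<psi> R rm rp \<theta> (Aeps R rm rp \<epsilon> :: ('d, 'n) config set) \<le> C * exp (- (\<eta> / 2) / \<theta>\<^sup>2)"
      using ev by eventually_elim (use mubound in auto)
    show "((\<lambda>\<theta>. C * exp (- (\<eta> / 2) / \<theta>\<^sup>2)) \<longlongrightarrow> 0) (at_right 0)"
      using tendsto_mult_right_zero[OF lim0, of C] by simp
  qed simp
  with part1 show ?thesis by blast
qed

end
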